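(* Let $a\in L_\infty(\mathbb{R}_+)$ be such that the limits $\lim_{v\to0}a(v)=a_0$ and $\lim_{v\to+\infty}a(v)=a_\infty$ exist. Then for each $k\in\mathbb{Z}_+$ the function $$\gamma_{a,k}(\xi)=\int_{\mathbb{R}_+}a\!\left(\frac{v}{2\xi}\right)\ell_k^2(v)\,\mathrm{d}v,\qquad\xi\in\mathbb{R}_+,$$ extends to a continuous function on $[0,+\infty]$, i.e. $\gamma_{a,k}\in C[0,+\infty]$, with $\gamma_{a,k}(+\infty)=a_0$ and $\gamma_{a,k}(0)=a_\infty$.
   Context: $\mathbb{R}_+=(0,\infty)$, $\mathbb{Z}_+=\{0,1,2,\dots\}$. $L_k(x)=\sum_{i=0}^k(-1)^i\binom{k}{i}\frac{x^i}{i!}$ is the Laguerre polynomial of degree $k$ and $\ell_k(x)=e^{-x/2}L_k(x)$. $C[0,+\infty]$ denotes the continuous functions on the compactified half-line $[0,+\infty]$. *)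

theory Defs
  imports "HOL-Analysis.Analysis"
begin

definition laguerre :: "nat \<Rightarrow> real \<Rightarrow> real" where
  "laguerre k x = (\<Sum>i\<le>k. (-1)^i * real (k choose i) * x^i / fact i)"

definition laguerre_fun :: "nat \<Rightarrow> real \<Rightarrow> real" where
  "laguerre_fun k x = exp (- x / 2) * laguerre k x"

definition gamma_ak :: "(real \<Rightarrow> real) \<Rightarrow> nat \<Rightarrow> real \<Rightarrow> real" where
  "gamma_ak a k \<xi> = (LINT v:{0<..}|lborel. a (v / (2 * \<xi>)) * (laguerre_fun k v)^2)"

end

theory Submission imports Defs "HOL-Probability.Distributions" "HOL-Computational_Algebra.Formal_Power_Series" begin

lemma binid:
  "(\<Sum>j\<le>k. (-1::real)^j * real (k choose j) * real ((i+j) choose j)) = (-1)^k * real (i choose k)"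
proof -
  have e1: "real ((i+j) choose j) = (-1)^j * ((- (real i + 1)) gchoose j)" for j
    using gbinomial_minus[of "real i + 1" j]
    by (simp add: binomial_gbinomial add.commute add.left_commute flip: power_add)
  have "(\<Sum>j\<le>k. (-1::real)^j * real (k choose j) * real ((i+j) choose j))
     = (\<Sum>j=0..k. ((- (real i + 1)) gchoose j) * (real k gchoose (k - j)))"
    apply (subst atLeast0AtMost[symmetric])
    apply (rule sum.cong, simp)
    apply (simp add: e1 binomial_gbinomial[symmetric])
    apply (subst binomial_symmetric[of _ k]) apply simp
    apply (simp add: power_mult_distrib[symmetric] flip: power_add)
    done
  also have "\<dots> = (real k - real i - 1) gchoose k"
    by (subst gbinomial_Vandermonde) (simp add: algebra_simps)
  also have "\<dots> = (-1)^k * real (i choose k)"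
    using gbinomial_negated_upper[of "real i" k]
    by (simp add: binomial_gbinomial flip: power_add mult.assoc)
  finally show ?thesis .
qed

lemma lf_sq: "laguerre_fun k v ^ 2 = exp (- v) * laguerre k v ^ 2"
proof -
  have "exp (- v / 2) ^ 2 = exp (- v)"
    by (simp add: power2_eq_square exp_add[symmetric])
  then show ?thesis by (simp add: laguerre_fun_def power_mult_distrib)
qed

definition lc :: "nat \<Rightarrow> nat \<Rightarrow> real" where
  "lc k i = (-1)^i * real (k choose i) / fact i"

lemma lag_sq: "laguerre k v ^ 2 = (\<Sum>i\<le>k. \<Sum>j\<le>k. lc k i * lc k j * v ^ (i + j))"
  unfolding laguerre_def power2_eq_square sum_product lc_def
  by (intro sum.cong refl) (simp add: power_add field_simps)

lemma mom: "has_bochner_integral lborel (\<lambda>x::real. indicator {0<..} x * (x ^ n * exp (- x))) (fact n)"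
proof (rule has_bochner_integral_nn_integral[where M=lborel and f="\<lambda>x. indicator {0<..} x * (x ^ n * exp (- x))" and x="fact n"])
  show "(\<lambda>x::real. indicator {0<..} x * (x ^ n * exp (- x))) \<in> borel_measurable lborel"
    by measurable
  show "AE x::real in lborel. 0 \<le> indicator {0<..} x * (x ^ n * exp (- x))"
    by (intro AE_I2) (auto split: split_indicator)
  show "0 \<le> (fact n :: real)" by simp
  have "(\<integral>\<^sup>+x. ennreal (indicator {0<..} x * (x ^ n * exp (- x))) \<partial>lborel)
      = (\<integral>\<^sup>+x. ennreal (x^n * exp (-x)) * indicator {0 ..} x \<partial>lborel)"
    using AE_lborel_singleton[of "0::real"]
    by (intro nn_integral_cong_AE) (auto elim!: eventually_mono split: split_indicator)
  also have "\<dots> = ennreal (fact n)" using nn_intergal_power_times_exp_Ici[of n] by simp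
  finally show "(\<integral>\<^sup>+x. ennreal (indicator {0<..} x * (x ^ n * exp (- x))) \<partial>lborel) = ennreal (fact n)" .
qed

lemma lc_sum: "(\<Sum>i\<le>k. \<Sum>j\<le>k. lc k i * lc k j * fact (i + j)) = (1::real)"
proof -
  have inner: "(\<Sum>j\<le>k. lc k j * fact (i + j)) = fact i * ((-1)^k * real (i choose k))" for i
  proof -
    have "fact (i + j) = (fact i * fact j * real ((i+j) choose j) :: real)" for j
    proof -
      have "fact j * fact i * ((i+j) choose j) = (fact (i+j)::nat)"
        using binomial_fact_lemma[of j "i+j"] by simp
      then have "real (fact j * fact i * ((i+j) choose j)) = real (fact (i+j))" by simp
      then show ?thesis by (simp only: of_nat_mult of_nat_fact mult_ac)
    qed
    then have "(\<Sum>j\<le>k. lc k j * fact (i + j)) = fact i * (\<Sum>j\<le>k. (-1::real)^j * real (k choose j) * real ((i+j) choose j))"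
      by (simp add: lc_def sum_distrib_left field_simps)
    then show ?thesis by (simp add: binid)
  qed
  have "(\<Sum>i\<le>k. \<Sum>j\<le>k. lc k i * lc k j * fact (i + j)) = (\<Sum>i\<le>k. lc k i * fact i * ((-1)^k * real (i choose k)))"
    by (simp add: mult.assoc sum_distrib_left[symmetric] inner)
  also have "\<dots> = (\<Sum>i\<le>k. if i = k then 1 else 0)"
    by (intro sum.cong refl) (auto simp: lc_def binomial_eq_0 power_add[symmetric])
  also have "\<dots> = 1" by simp
  finally show ?thesis .
qed

lemma int_g: "has_bochner_integral lborel (\<lambda>v. indicator {0<..} v * laguerre_fun k v ^ 2) 1"
proof -
  have eq: "(\<lambda>v. indicator {0<..} v * laguerre_fun k v ^ 2) =
     (\<lambda>v. \<Sum>i\<le>k. \<Sum>j\<le>k. lc k i * lc k j * (indicator {0<..} v * (v ^ (i+j) * exp (- v))))"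
    by (auto simp: lf_sq lag_sq sum_distrib_left sum_distrib_right mult_ac split: split_indicator)
  have "has_bochner_integral lborel
     (\<lambda>v. \<Sum>i\<le>k. \<Sum>j\<le>k. lc k i * lc k j * (indicator {0<..} v * (v ^ (i+j) * exp (- v))))
     (\<Sum>i\<le>k. \<Sum>j\<le>k. lc k i * lc k j * fact (i + j))"
    by (intro has_bochner_integral_sum has_bochner_integral_mult_right mom)
  then show ?thesis using lc_sum eq by simp
qed


lemma pow_fact_le_exp: assumes "0 \<le> y" shows "y^i / fact i \<le> exp (y::real)"
proof -
  have s: "(\<lambda>n. y^n / fact n) sums exp y" using exp_converges[of y] by (simp add: divide_inverse_commute)
  have "y^i/fact i \<le> sum (\<lambda>n. y^n/fact n) {..<Suc i}"
    using assms by (simp add: sum_nonneg)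
  also have "\<dots> \<le> exp y"
    using sum_le_suminf[OF sums_summable[OF s], of "{..<Suc i}"] sums_unique[OF s] assms by simp
  finally show ?thesis .
qed

lemma lag_bound: assumes "0 \<le> y" shows "\<bar>laguerre k y\<bar> \<le> 5^k * exp (y/4)"
proof -
  have "\<bar>laguerre k y\<bar> \<le> (\<Sum>i\<le>k. \<bar>(-1)^i * real (k choose i) * y^i / fact i\<bar>)"
    unfolding laguerre_def by (rule sum_abs)
  also have "\<dots> = (\<Sum>i\<le>k. real (k choose i) * (4^i * ((y/4)^i / fact i)))"
    using assms by (intro sum.cong refl) (simp add: abs_mult power_divide)
  also have "\<dots> \<le> (\<Sum>i\<le>k. real (k choose i) * (4^i * exp (y/4)))"
    using assms by (intro sum_mono mult_left_mono pow_fact_le_exp) auto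
  also have "\<dots> = (\<Sum>i\<le>k. real (k choose i) * 4^i * 1^(k-i)) * exp (y/4)"
    by (simp add: sum_distrib_left sum_distrib_right mult_ac)
  also have "\<dots> = 5^k * exp (y/4)"
    using binomial_ring[of "4::real" 1 k] by simp
  finally show ?thesis .
qed

lemma g_bound: assumes "0 \<le> y" shows "laguerre_fun k y ^ 2 \<le> 25^k * exp (- y / 2)"
proof -
  have "laguerre k y ^ 2 = \<bar>laguerre k y\<bar> ^ 2" by simp
  also have "\<dots> \<le> (5^k * exp (y/4))^2"
    by (intro power_mono lag_bound assms) simp
  also have "\<dots> = 25^k * exp (y/2)"
  proof -
    have "(5::real)^k * 5^k = 25^k" by (simp flip: power_mult_distrib)
    moreover have "exp (y/4) * exp (y/4) = exp (y/2)" by (simp flip: exp_add)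
    ultimately show ?thesis by (simp add: power2_eq_square mult_ac)
  qed
  finally have h: "laguerre k y ^ 2 \<le> 25^k * exp (y/2)" .
  have "laguerre_fun k y ^ 2 = exp (- y) * laguerre k y ^ 2" by (rule lf_sq)
  also have "\<dots> \<le> exp (- y) * (25^k * exp (y/2))" by (intro mult_left_mono h) simp
  also have "\<dots> = 25^k * exp (- y / 2)" by (simp add: exp_add[symmetric] mult_ac)
  finally show ?thesis .
qed


lemma lf_cont: "continuous_on UNIV (laguerre_fun k)"
  unfolding laguerre_fun_def[abs_def] laguerre_def by (intro continuous_intros) auto

lemma lf_meas[measurable]: "laguerre_fun k \<in> borel_measurable borel"
  by (rule borel_measurable_continuous_onI[OF lf_cont])

lemma int_exp: assumes "0 < c"
  shows "integrable lborel (\<lambda>x::real. indicator {0<..} x * exp (- (c * x)))"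
proof -
  have "integrable lborel (\<lambda>x::real. indicator {0<..} x * (x ^ 0 * exp (- x)))"
    using mom[of 0] by (rule integrable.intros)
  from lborel_integrable_real_affine[OF this, of c 0] assms
  have "integrable lborel (\<lambda>x::real. indicator {0<..} (c * x) * exp (- (c * x)))" by simp
  moreover have "indicator {0<..} (c * x) = (indicator {0<..} x :: real)" for x
    using assms by (auto split: split_indicator simp: zero_less_mult_iff)
  ultimately show ?thesis by simp
qed


lemma fl1: fixes v :: real assumes v: "v > 0" shows "filterlim (\<lambda>t::real. v / (2 * t)) (at_right 0) at_top"
  unfolding filterlim_at
proof (rule conjI)
  have "v / (2 * t) > 0" if "t > 0" for t :: real using v that by simp
  then show "eventually (\<lambda>t::real. v / (2 * t) \<in> {0<..} \<and> v / (2 * t) \<noteq> 0) at_top"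
    by (intro eventually_mono[OF eventually_gt_at_top[of "0::real"]]) auto
  have "((\<lambda>t::real. (v/2) * inverse t) \<longlongrightarrow> (v/2) * 0) at_top"
    by (intro tendsto_mult tendsto_const tendsto_inverse_0_at_top filterlim_ident)
  moreover have "(\<lambda>t::real. (v/2) * inverse t) = (\<lambda>t. v / (2 * t))"
    by (simp add: field_simps)
  ultimately show "((\<lambda>t::real. v / (2 * t)) \<longlongrightarrow> 0) at_top"
    by simp
qed
lemma fl2: fixes v :: real assumes v: "v > 0" shows "filterlim (\<lambda>t::real. v / (2 * inverse t)) at_top at_top"
proof -
  have "filterlim (\<lambda>t::real. (v/2) * t) at_top at_top"
    by (rule filterlim_tendsto_pos_mult_at_top[OF tendsto_const _ filterlim_ident]) (use v in simp)
  moreover have "(\<lambda>t::real. (v/2) * t) = (\<lambda>t. v / (2 * inverse t))"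
    by (simp add: field_simps)
  ultimately show ?thesis by simp
qed

theorem mainTheorem8:
  fixes a :: "real \<Rightarrow> real" and a0 a_inf :: real and M :: real and k :: nat
  assumes meas: "set_borel_measurable lborel {0<..} a"
    and ess_bdd: "AE v in lborel. v > 0 \<longrightarrow> \<bar>a v\<bar> \<le> M"
    and lim0: "(a \<longlongrightarrow> a0) (at_right 0)"
    and liminf: "(a \<longlongrightarrow> a_inf) at_top"
  shows "continuous_on {0<..} (gamma_ak a k)
       \<and> (gamma_ak a k \<longlongrightarrow> a0) at_top
       \<and> (gamma_ak a k \<longlongrightarrow> a_inf) (at_right 0)"
proof -
  define A where "A u = indicator {0<..} u * a u" for u :: real
  have Ameas[measurable]: "A \<in> borel_measurable borel"
    using meas unfolding set_borel_measurable_def A_def[abs_def] by simp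
  have Apos: "u > 0 \<Longrightarrow> A u = a u" for u by (simp add: A_def)
  have Aneg: "u \<le> 0 \<Longrightarrow> A u = 0" for u by (simp add: A_def)
  have Abd: "AE u in lborel. \<bar>A u\<bar> \<le> \<bar>M\<bar>"
    using ess_bdd by eventually_elim (auto simp: A_def split: split_indicator)
  define g where "g v = laguerre_fun k v ^ 2" for v
  have g_meas[measurable]: "g \<in> borel_measurable borel" unfolding g_def[abs_def] by measurable
  have g_nn: "0 \<le> g v" for v by (simp add: g_def)
  have gam_eq: "gamma_ak a k \<xi> = (\<integral>v. A (v / (2 * \<xi>)) * g v \<partial>lborel)" if "\<xi> > 0" for \<xi>
    unfolding gamma_ak_def set_lebesgue_integral_def
  proof (rule Bochner_Integration.integral_cong[OF refl])
    fix v :: real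
    have "(0 < v) = (0 < v / (2 * \<xi>))" using that by (simp add: zero_less_divide_iff)
    then show "indicator {0<..} v *\<^sub>R (a (v / (2 * \<xi>)) * laguerre_fun k v ^ 2) = A (v / (2 * \<xi>)) * g v"
      by (simp add: A_def g_def split: split_indicator)
  qed
  define w where "w v = \<bar>M\<bar> * (indicator {0<..} v * g v)" for v :: real
  have w_int: "integrable lborel w"
    unfolding w_def g_def using int_g[of k] by (intro integrable_mult_right) (rule integrable.intros)
  have bound: "AE v in lborel. norm (A (v / (2 * \<xi>)) * g v) \<le> w v" if "\<xi> > 0" for \<xi>
  proof -
    have "AE v in lborel. \<bar>A (0 + 1 / (2 * \<xi>) * v)\<bar> \<le> \<bar>M\<bar>"
      by (rule AE_borel_affine[OF _ _ Abd]) (use that in auto)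
    then show ?thesis
    proof eventually_elim
      case (elim v)
      show ?case
      proof (cases "v > 0")
        case True
        then show ?thesis using elim g_nn[of v]
          by (auto simp: w_def abs_mult intro!: mult_right_mono)
      next
        case False
        then have "v / (2 * \<xi>) \<le> 0" using that by (simp add: divide_nonpos_pos)
        then show ?thesis using False by (simp add: Aneg w_def g_nn)
      qed
    qed
  qed
  have lim_gen: "((\<lambda>t. gamma_ak a k (\<phi> t)) \<longlongrightarrow> L) at_top"
    if ev: "eventually (\<lambda>t. \<phi> t > 0) at_top"
      and lv: "\<And>v. v > 0 \<Longrightarrow> ((\<lambda>t. A (v / (2 * \<phi> t))) \<longlongrightarrow> L) at_top" for \<phi> :: "real \<Rightarrow> real" and L
  proof -
    have "((\<lambda>t. \<integral>v. A (v / (2 * \<phi> t)) * g v \<partial>lborel) \<longlongrightarrow> (\<integral>v. L * (indicator {0<..} v * g v) \<partial>lborel)) at_top"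
    proof (rule integral_dominated_convergence_at_top[where w=w])
      show "(\<lambda>v. L * (indicator {0<..} v * g v)) \<in> borel_measurable lborel" by measurable
      show "(\<lambda>v. A (v / (2 * \<phi> t)) * g v) \<in> borel_measurable lborel" for t by measurable
      show "integrable lborel w" by (rule w_int)
      show "\<forall>\<^sub>F t in at_top. AE v in lborel. norm (A (v / (2 * \<phi> t)) * g v) \<le> w v"
        using ev by eventually_elim (rule bound)
      show "AE v in lborel. ((\<lambda>t. A (v / (2 * \<phi> t)) * g v) \<longlongrightarrow> L * (indicator {0<..} v * g v)) at_top"
      proof (intro AE_I2)
        fix v :: real
        show "((\<lambda>t. A (v / (2 * \<phi> t)) * g v) \<longlongrightarrow> L * (indicator {0<..} v * g v)) at_top"
        proof (cases "v > 0")
          case True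
          then show ?thesis using lv[OF True] by (auto intro!: tendsto_intros)
        next
          case False
          have "eventually (\<lambda>t. A (v / (2 * \<phi> t)) * g v = L * (indicator {0<..} v * g v)) at_top"
            using ev
          proof eventually_elim
            case (elim t)
            then have "v / (2 * \<phi> t) \<le> 0" using False by (simp add: divide_nonpos_pos)
            then show ?case using False by (simp add: Aneg)
          qed
          then show ?thesis by (rule tendsto_eventually)
        qed
      qed
    qed
    moreover have "(\<integral>v. L * (indicator {0<..} v * g v) \<partial>lborel) = L"
      using int_g[of k] unfolding g_def by (simp add: has_bochner_integral_integral_eq)
    moreover have "eventually (\<lambda>t. (\<integral>v. A (v / (2 * \<phi> t)) * g v \<partial>lborel) = gamma_ak a k (\<phi> t)) at_top"
      using ev by eventually_elim (simp add: gam_eq)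
    ultimately show ?thesis using tendsto_cong by fastforce
  qed
  have A0: "(A \<longlongrightarrow> a0) (at_right 0)"
  proof -
    have "eventually (\<lambda>u. a u = A u) (at_right (0::real))"
      using eventually_at_right_less[of "0::real"] by eventually_elim (simp add: Apos)
    with lim0 show ?thesis by (rule tendsto_cong[THEN iffD1, rotated])
  qed
  have Ainf: "(A \<longlongrightarrow> a_inf) at_top"
  proof -
    have "eventually (\<lambda>u. a u = A u) (at_top::real filter)"
      using eventually_gt_at_top[of "0::real"] by eventually_elim (simp add: Apos)
    with liminf show ?thesis by (rule tendsto_cong[THEN iffD1, rotated])
  qed
  have L1: "(gamma_ak a k \<longlongrightarrow> a0) at_top"
  proof -
    have "((\<lambda>t. gamma_ak a k ((\<lambda>t. t) t)) \<longlongrightarrow> a0) at_top"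
    proof (rule lim_gen)
      show "eventually (\<lambda>t::real. t > 0) at_top" by (rule eventually_gt_at_top)
      fix v :: real assume v: "v > 0"
      note fl1[OF v]
      from filterlim_compose[OF A0 this]
      show "((\<lambda>t. A (v / (2 * t))) \<longlongrightarrow> a0) at_top" .
    qed
    then show ?thesis by simp
  qed
  have L2: "(gamma_ak a k \<longlongrightarrow> a_inf) (at_right 0)"
    unfolding filterlim_at_right_to_top
  proof (rule lim_gen)
    show "eventually (\<lambda>t::real. inverse t > 0) at_top"
      using eventually_gt_at_top[of "0::real"] by eventually_elim simp
    fix v :: real assume v: "v > 0"
    note fl2[OF v]
    from filterlim_compose[OF Ainf this]
    show "((\<lambda>t. A (v / (2 * inverse t))) \<longlongrightarrow> a_inf) at_top" .
  qed
  have g_cont: "isCont g y" for y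
    unfolding g_def[abs_def] using lf_cont[of k]
    by (intro continuous_intros) (simp add: continuous_on_eq_continuous_at)
  have cont: "isCont (gamma_ak a k) \<xi>0" if x0: "\<xi>0 > 0" for \<xi>0
  proof -
    define c where "c \<xi> = max (\<xi>0/2) \<xi>" for \<xi>
    define K where "K \<xi> = (\<integral>x. A x * g (2 * c \<xi> * x) \<partial>lborel)" for \<xi>
    have cge: "c \<xi> \<ge> \<xi>0/2" for \<xi> by (simp add: c_def)
    have "isCont K \<xi>0"
    proof (rule continuous_at_sequentiallyI)
      fix u :: "nat \<Rightarrow> real" assume u: "u \<longlonglongrightarrow> \<xi>0"
      show "(\<lambda>n. K (u n)) \<longlonglongrightarrow> K \<xi>0"
        unfolding K_def
      proof (rule integral_dominated_convergence[where w = "\<lambda>x. \<bar>M\<bar> * (25^k * (indicator {0<..} x * exp (- ((\<xi>0/2) * x))))"])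
        show "(\<lambda>x. A x * g (2 * c \<xi>0 * x)) \<in> borel_measurable lborel" by measurable
        show "(\<lambda>x. A x * g (2 * c (u n) * x)) \<in> borel_measurable lborel" for n by measurable
        show "integrable lborel (\<lambda>x. \<bar>M\<bar> * (25^k * (indicator {0<..} x * exp (- ((\<xi>0/2) * x)))))"
          using int_exp[of "\<xi>0/2"] x0 by simp
        show "AE x in lborel. (\<lambda>n. A x * g (2 * c (u n) * x)) \<longlonglongrightarrow> A x * g (2 * c \<xi>0 * x)"
        proof (intro AE_I2 tendsto_mult tendsto_const)
          fix x :: real
          have "(\<lambda>n. c (u n)) \<longlonglongrightarrow> c \<xi>0"
            unfolding c_def by (intro tendsto_max tendsto_const u)
          then have "(\<lambda>n. 2 * c (u n) * x) \<longlonglongrightarrow> 2 * c \<xi>0 * x"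
            by (intro tendsto_mult tendsto_const)
          then show "(\<lambda>n. g (2 * c (u n) * x)) \<longlonglongrightarrow> g (2 * c \<xi>0 * x)"
            by (rule isCont_tendsto_compose[OF g_cont])
        qed
        show "AE x in lborel. norm (A x * g (2 * c (u n) * x)) \<le> \<bar>M\<bar> * (25^k * (indicator {0<..} x * exp (- ((\<xi>0/2) * x))))" for n
          using Abd
        proof eventually_elim
          case (elim x)
          show ?case
          proof (cases "x > 0")
            case True
            have "g (2 * c (u n) * x) \<le> 25^k * exp (- (2 * c (u n) * x) / 2)"
              unfolding g_def using True cge[of "u n"] x0 by (intro g_bound) simp
            also have "\<dots> \<le> 25^k * exp (- ((\<xi>0/2) * x))"
              using True cge[of "u n"] by (intro mult_left_mono) (auto intro: mult_right_mono)
            finally have gb: "g (2 * c (u n) * x) \<le> 25^k * exp (- ((\<xi>0/2) * x))" .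
            have "norm (A x * g (2 * c (u n) * x)) = \<bar>A x\<bar> * g (2 * c (u n) * x)"
              by (simp add: abs_mult g_nn)
            also have "\<dots> \<le> \<bar>M\<bar> * (25^k * exp (- ((\<xi>0/2) * x)))"
              using elim gb g_nn by (intro mult_mono) auto
            finally show ?thesis using True by simp
          next
            case False
            then show ?thesis by (simp add: Aneg)
          qed
        qed
      qed
    qed
    then have cK: "isCont (\<lambda>\<xi>. 2 * \<xi> * K \<xi>) \<xi>0" by (intro continuous_intros)
    have ev: "eventually (\<lambda>\<xi>. gamma_ak a k \<xi> = 2 * \<xi> * K \<xi>) (nhds \<xi>0)"
    proof -
      have "eventually (\<lambda>\<xi>. \<xi> \<in> {\<xi>0/2<..}) (nhds \<xi>0)"
        using x0 by (intro eventually_nhds_in_open) auto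
      then show ?thesis
      proof eventually_elim
        case (elim \<xi>)
        then have xp: "\<xi> > 0" "c \<xi> = \<xi>" using x0 by (auto simp: c_def)
        have "gamma_ak a k \<xi> = (\<integral>v. A (v / (2 * \<xi>)) * g v \<partial>lborel)" by (rule gam_eq[OF xp(1)])
        also have "\<dots> = \<bar>2 * \<xi>\<bar> *\<^sub>R (\<integral>x. A ((0 + 2 * \<xi> * x) / (2 * \<xi>)) * g (0 + 2 * \<xi> * x) \<partial>lborel)"
          using xp by (intro lborel_integral_real_affine) simp
        also have "\<dots> = 2 * \<xi> * K \<xi>"
          using xp by (simp add: K_def)
        finally show ?case .
      qed
    qed
    show ?thesis using isCont_cong[OF ev] cK by simp
  qed
  have C: "continuous_on {0<..} (gamma_ak a k)"
    by (intro continuous_at_imp_continuous_on ballI cont) simp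
  show ?thesis using C L1 L2 by blast
qed

end
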